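(* Let $S\subseteq\mathbb{R}^m$ be a semialgebraic set. Then there exist $\mathcal N\in ISDnet(m,n,1)$ and $C\in\mathbb{N}$ such that for every $c\ge C$ and every $x\in\mathbb{R}^m$, $\mathrm{ODESolve}(\mathcal N,c,x,(0,0,0),1) = (0,\chi_S(x))$, where $0\in\mathbb{R}^n$ and $\chi_S$ is the characteristic function of $S$ ($\chi_S(x)=1$ if $x\in S$, $0$ otherwise).
   Context: $ISD(D)$ is the smallest set of functions $D\to\mathbb{R}$ containing all restrictions of real polynomials and closed under pointwise $\min$, $\max$; vector/matrix maps are ISD if all entries are. $ISDnet(m,n,1) := ISD(\mathbb{R}^m\times\mathbb{R}^{n+1}\times\mathbb{R},\ \mathbb{R}^{(n+1)\times(n+1)}\times\mathbb{R}^{n+1})$; for $\mathcal N$ in it write $\mathcal N(x,y,t,s)=(M(x,y,t,s),b(x,y,t,s))$. $\mathrm{clamp\text{-}sol}_c(M,b):=\mathrm{clamp}(M^{-1}b,-c,c)$ (componentwise $a_i\mapsto\min(\max(a_i,-c),c)$) if $M$ is invertible, and $0$ otherwise. $\mathrm{ODESolve}(\mathcal N,c,x,(y_0,t_0,s_0),s_{\mathrm{final}})$ denotes $(y(s_{\mathrm{final}}),t(s_{\mathrm{final}}))$ where $(y,t)$ is the exact solution of $\frac{d}{ds}(y,t)=\mathrm{clamp\text{-}sol}_c\big(M(x,y,t,s),b(x,y,t,s)\big)$ with $(y,t)(s_0)=(y_0,t_0)$. A semialgebraic set is a finite union of sets defined by finitely many polynomial equations and strict polynomial inequalities. *)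

theory Defs
  imports Complex_Main "Jordan_Normal_Form.Matrix"
begin

inductive_set polys_on :: "('a \<Rightarrow> real) set \<Rightarrow> ('a \<Rightarrow> real) set" for V where
  const: "(\<lambda>z. c) \<in> polys_on V"
| var: "f \<in> V \<Longrightarrow> f \<in> polys_on V"
| add: "f \<in> polys_on V \<Longrightarrow> g \<in> polys_on V \<Longrightarrow> (\<lambda>z. f z + g z) \<in> polys_on V"
| mult: "f \<in> polys_on V \<Longrightarrow> g \<in> polys_on V \<Longrightarrow> (\<lambda>z. f z * g z) \<in> polys_on V"

inductive_set ISD_on :: "('a \<Rightarrow> real) set \<Rightarrow> ('a \<Rightarrow> real) set" for V where
  poly: "f \<in> polys_on V \<Longrightarrow> f \<in> ISD_on V"
| min: "f \<in> ISD_on V \<Longrightarrow> g \<in> ISD_on V \<Longrightarrow> (\<lambda>z. min (f z) (g z)) \<in> ISD_on V"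
| max: "f \<in> ISD_on V \<Longrightarrow> g \<in> ISD_on V \<Longrightarrow> (\<lambda>z. max (f z) (g z)) \<in> ISD_on V"

definition polys :: "nat \<Rightarrow> (real vec \<Rightarrow> real) set" where
  "polys m = polys_on {(\<lambda>x. x $ i) | i. i < m}"

definition semialgebraic :: "nat \<Rightarrow> real vec set \<Rightarrow> bool" where
  "semialgebraic m S \<longleftrightarrow>
     (\<exists>F :: ((real vec \<Rightarrow> real) set \<times> (real vec \<Rightarrow> real) set) set.
        finite F \<and>
        (\<forall>(P, Q) \<in> F. finite P \<and> finite Q \<and> P \<subseteq> polys m \<and> Q \<subseteq> polys m) \<and>
        S = (\<Union>(P, Q) \<in> F. {x \<in> carrier_vec m. (\<forall>p\<in>P. p x = 0) \<and> (\<forall>q\<in>Q. q x > 0)}))"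

text \<open>Inputs of an ISD-net in ISDnet(m,n,1): (x, z, s) with x in R^m,
  z = (y,t) in R^(n+1) (t is the last coordinate z $ n), s in R.\<close>
type_synonym net_input = "real vec \<times> real vec \<times> real"

definition net_vars :: "nat \<Rightarrow> nat \<Rightarrow> (net_input \<Rightarrow> real) set" where
  "net_vars m n = {(\<lambda>(x, z, s). x $ i) | i. i < m} \<union> {(\<lambda>(x, z, s). z $ j) | j. j < n + 1}
                   \<union> {(\<lambda>(x, z, s). s)}"

text \<open>A network is given by the entry functions of M (an (n+1)x(n+1) matrix) and b
  (a vector in R^(n+1)).\<close>
type_synonym isdnet = "(nat \<Rightarrow> nat \<Rightarrow> (net_input \<Rightarrow> real)) \<times> (nat \<Rightarrow> (net_input \<Rightarrow> real))"

definition is_ISDnet :: "nat \<Rightarrow> nat \<Rightarrow> isdnet \<Rightarrow> bool" where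
  "is_ISDnet m n N \<longleftrightarrow>
     (\<forall>i < n + 1. \<forall>j < n + 1. fst N i j \<in> ISD_on (net_vars m n)) \<and>
     (\<forall>i < n + 1. snd N i \<in> ISD_on (net_vars m n))"

definition net_M :: "nat \<Rightarrow> isdnet \<Rightarrow> real vec \<Rightarrow> real vec \<Rightarrow> real \<Rightarrow> real mat" where
  "net_M n N x z s = mat (n + 1) (n + 1) (\<lambda>(i, j). fst N i j (x, z, s))"

definition net_b :: "nat \<Rightarrow> isdnet \<Rightarrow> real vec \<Rightarrow> real vec \<Rightarrow> real \<Rightarrow> real vec" where
  "net_b n N x z s = vec (n + 1) (\<lambda>i. snd N i (x, z, s))"

definition clamp :: "real \<Rightarrow> real \<Rightarrow> real" where
  "clamp c a = min (max a (- c)) c"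

definition clamp_sol :: "real \<Rightarrow> real mat \<Rightarrow> real vec \<Rightarrow> real vec" where
  "clamp_sol c M b =
     (if invertible_mat M
      then vec (dim_vec b) (\<lambda>i. clamp c ((THE v. v \<in> carrier_vec (dim_col M) \<and> M *\<^sub>v v = b) $ i))
      else 0\<^sub>v (dim_vec b))"

definition ode_solution ::
  "nat \<Rightarrow> isdnet \<Rightarrow> real \<Rightarrow> real vec \<Rightarrow> real vec \<Rightarrow> real \<Rightarrow> real \<Rightarrow> (real \<Rightarrow> real vec) \<Rightarrow> bool" where
  "ode_solution n N c x z0 s0 s1 sol \<longleftrightarrow>
     sol s0 = z0 \<and>
     (\<forall>s \<in> {s0..s1}. sol s \<in> carrier_vec (n + 1) \<and>
        (\<forall>i < n + 1. ((\<lambda>r. sol r $ i) has_real_derivative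
            (clamp_sol c (net_M n N x (sol s) s) (net_b n N x (sol s) s) $ i)) (at s within {s0..s1})))"

end

theory Submission
  imports Defs
begin


section \<open>ISD closure\<close>

lemma polys_on_minus: "f \<in> polys_on V \<Longrightarrow> g \<in> polys_on V \<Longrightarrow> (\<lambda>z. f z - g z) \<in> polys_on V"
proof -
  assume a: "f \<in> polys_on V" "g \<in> polys_on V"
  have "(\<lambda>z. f z + (\<lambda>z. (\<lambda>z. -1) z * g z) z) \<in> polys_on V"
    by (intro polys_on.add polys_on.mult polys_on.const a)
  thus ?thesis by simp
qed

lemma ISD_neg: "f \<in> ISD_on V \<Longrightarrow> (\<lambda>z. - f z) \<in> ISD_on V"
proof (induction rule: ISD_on.induct)
  case (poly f)
  have "(\<lambda>z. (\<lambda>z. -1) z * f z) \<in> polys_on V" by (intro polys_on.mult polys_on.const poly)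
  then show ?case by (simp add: ISD_on.poly)
next
  case (min f g)
  have "(\<lambda>z. max (- f z) (- g z)) \<in> ISD_on V" using min by (intro ISD_on.max)
  moreover have "(\<lambda>z. max (- f z) (- g z)) = (\<lambda>z. - min (f z) (g z))" by (rule ext) linarith
  ultimately show ?case by simp
next
  case (max f g)
  have "(\<lambda>z. min (- f z) (- g z)) \<in> ISD_on V" using max by (intro ISD_on.min)
  moreover have "(\<lambda>z. min (- f z) (- g z)) = (\<lambda>z. - max (f z) (g z))" by (rule ext) linarith
  ultimately show ?case by simp
qed

lemma ISD_add_poly: "f \<in> ISD_on V \<Longrightarrow> p \<in> polys_on V \<Longrightarrow> (\<lambda>z. p z + f z) \<in> ISD_on V"
proof (induction rule: ISD_on.induct)
  case (poly f)
  then show ?case by (intro ISD_on.poly polys_on.add)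
next
  case (min f g)
  have "(\<lambda>z. min (p z + f z) (p z + g z)) \<in> ISD_on V" using min by (intro ISD_on.min)
  moreover have "(\<lambda>z. min (p z + f z) (p z + g z)) = (\<lambda>z. p z + min (f z) (g z))" by (rule ext) linarith
  ultimately show ?case by simp
next
  case (max f g)
  have "(\<lambda>z. max (p z + f z) (p z + g z)) \<in> ISD_on V" using max by (intro ISD_on.max)
  moreover have "(\<lambda>z. max (p z + f z) (p z + g z)) = (\<lambda>z. p z + max (f z) (g z))" by (rule ext) linarith
  ultimately show ?case by simp
qed

lemma ISD_add: "f \<in> ISD_on V \<Longrightarrow> g \<in> ISD_on V \<Longrightarrow> (\<lambda>z. f z + g z) \<in> ISD_on V"
proof (induction arbitrary: g rule: ISD_on.induct)
  case (poly f)
  then show ?case by (simp add: ISD_add_poly)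
next
  case (min f1 f2)
  have "(\<lambda>z. min (f1 z + g z) (f2 z + g z)) \<in> ISD_on V" using min by (intro ISD_on.min) auto
  moreover have "(\<lambda>z. min (f1 z + g z) (f2 z + g z)) = (\<lambda>z. min (f1 z) (f2 z) + g z)" by (rule ext) linarith
  ultimately show ?case by simp
next
  case (max f1 f2)
  have "(\<lambda>z. max (f1 z + g z) (f2 z + g z)) \<in> ISD_on V" using max by (intro ISD_on.max) auto
  moreover have "(\<lambda>z. max (f1 z + g z) (f2 z + g z)) = (\<lambda>z. max (f1 z) (f2 z) + g z)" by (rule ext) linarith
  ultimately show ?case by simp
qed

lemma ISD_minus: "f \<in> ISD_on V \<Longrightarrow> g \<in> ISD_on V \<Longrightarrow> (\<lambda>z. f z - g z) \<in> ISD_on V"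
  using ISD_add[of f V "\<lambda>z. - g z"] ISD_neg[of g V] by simp

lemma ISD_const: "(\<lambda>z. c) \<in> ISD_on V"
  by (intro ISD_on.poly polys_on.const)

lemma ISD_cmult_nonneg: "f \<in> ISD_on V \<Longrightarrow> (c::real) \<ge> 0 \<Longrightarrow> (\<lambda>z. c * f z) \<in> ISD_on V"
proof (induction rule: ISD_on.induct)
  case (poly f)
  then show ?case by (intro ISD_on.poly polys_on.mult polys_on.const)
next
  case (min f g)
  have "(\<lambda>z. min (c * f z) (c * g z)) \<in> ISD_on V" using min by (intro ISD_on.min)
  moreover have "(\<lambda>z. min (c * f z) (c * g z)) = (\<lambda>z. c * min (f z) (g z))"
    using min.prems by (intro ext) (simp add: min_mult_distrib_left)
  ultimately show ?case by simp
next
  case (max f g)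
  have "(\<lambda>z. max (c * f z) (c * g z)) \<in> ISD_on V" using max by (intro ISD_on.max)
  moreover have "(\<lambda>z. max (c * f z) (c * g z)) = (\<lambda>z. c * max (f z) (g z))"
    using max.prems by (intro ext) (simp add: max_mult_distrib_left)
  ultimately show ?case by simp
qed

lemma ISD_cmult: assumes f: "f \<in> ISD_on V" shows "(\<lambda>z. (c::real) * f z) \<in> ISD_on V"
proof (cases "c \<ge> 0")
  case True
  then show ?thesis using ISD_cmult_nonneg f by blast
next
  case False
  have "(\<lambda>z. - ((- c) * f z)) \<in> ISD_on V" using False f by (intro ISD_neg ISD_cmult_nonneg) auto
  then show ?thesis by simp
qed

lemma ISD_sum: "(\<And>k. k < (K::nat) \<Longrightarrow> f k \<in> ISD_on V) \<Longrightarrow> (\<lambda>z. \<Sum>k<K. f k z) \<in> ISD_on V"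
proof (induction K)
  case 0
  then show ?case by (simp add: ISD_const)
next
  case (Suc K)
  have "(\<lambda>z. (\<Sum>k<K. f k z) + f K z) \<in> ISD_on V" using Suc by (intro ISD_add) auto
  then show ?case by simp
qed

lemma polys_comp:
  assumes "\<And>v. v \<in> V \<Longrightarrow> (\<lambda>w. v (\<pi> w)) \<in> polys_on W"
  shows "f \<in> polys_on V \<Longrightarrow> (\<lambda>w. f (\<pi> w)) \<in> polys_on W"
proof (induction rule: polys_on.induct)
  case (const c) then show ?case by (rule polys_on.const)
next
  case (var f) then show ?case using assms by blast
next
  case (add f g) then show ?case by (intro polys_on.add)
next
  case (mult f g) then show ?case by (intro polys_on.mult)
qed

lemma ISD_comp:
  assumes "\<And>v. v \<in> V \<Longrightarrow> (\<lambda>w. v (\<pi> w)) \<in> polys_on W"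
  shows "f \<in> ISD_on V \<Longrightarrow> (\<lambda>w. f (\<pi> w)) \<in> ISD_on W"
proof (induction rule: ISD_on.induct)
  case (poly f) show ?case by (rule ISD_on.poly) (rule polys_comp[OF assms poly])
next
  case (min f g) then show ?case by (intro ISD_on.min)
next
  case (max f g) then show ?case by (intro ISD_on.max)
qed

section \<open>The primitive of the bump\<close>

definition bump :: "real \<Rightarrow> real" where "bump \<sigma> = max 0 (\<sigma> * (1 - \<sigma>))"
definition Bp :: "real \<Rightarrow> real" where
  "Bp \<sigma> = (if \<sigma> \<le> 0 then 0 else if \<sigma> \<le> 1 then \<sigma>^2/2 - \<sigma>^3/3 else 1/6)"

lemma deriv_glue:
  fixes f :: "real \<Rightarrow> real"
  assumes "(f has_real_derivative D) (at a within {..a})" "(f has_real_derivative D) (at a within {a..})"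
  shows "(f has_real_derivative D) (at a)"
proof -
  have U: "{..a} \<union> {a..} = (UNIV::real set)" by auto
  have "(f has_real_derivative D) (at a within ({..a} \<union> {a..}))"
    using assms unfolding has_field_derivative_iff Lim_within_Un by simp
  then show ?thesis using U by simp
qed

lemma cubic_deriv: "((\<lambda>\<sigma>::real. \<sigma>^2/2 - \<sigma>^3/3) has_real_derivative (x * (1 - x))) (at x within S)"
  by (auto intro!: derivative_eq_intros simp: algebra_simps power2_eq_square)

lemma Bp_deriv: "(Bp has_real_derivative bump x) (at x)"
proof -
  consider "x < 0" | "x = 0" | "0 < x" "x < 1" | "x = 1" | "x > 1" by linarith
  then show ?thesis
  proof cases
    case 1
    have b: "bump x = 0" using 1 unfolding bump_def by (simp add: mult_neg_pos)
    have "((\<lambda>_. 0::real) has_real_derivative 0) (at x)" by simp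
    then have "(Bp has_real_derivative 0) (at x)"
      by (rule has_field_derivative_transform_within_open[where S="{..<0}"]) (use 1 in \<open>auto simp: Bp_def\<close>)
    then show ?thesis using b by simp
  next
    case 2
    have b: "bump x = 0" "x * (1 - x) = 0" using 2 unfolding bump_def by simp_all
    show ?thesis
    proof (rule deriv_glue)
      have "((\<lambda>_. 0::real) has_real_derivative 0) (at x within {..x})" by simp
      then have "(Bp has_real_derivative 0) (at x within {..x})"
        by (rule has_field_derivative_transform_within[where d=1]) (use 2 in \<open>auto simp: Bp_def\<close>)
      then show "(Bp has_real_derivative bump x) (at x within {..x})" using b by simp
      have "(Bp has_real_derivative (x * (1 - x))) (at x within {x..})"
        by (rule has_field_derivative_transform_within[OF cubic_deriv, where d=1])
           (use 2 in \<open>auto simp: Bp_def dist_real_def\<close>)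
      then show "(Bp has_real_derivative bump x) (at x within {x..})" using b by simp
    qed
  next
    case 3
    have b: "bump x = x * (1 - x)" using 3 unfolding bump_def by simp
    have "(Bp has_real_derivative (x * (1 - x))) (at x)"
      by (rule has_field_derivative_transform_within_open[OF cubic_deriv, where S="{0<..<1}"])
         (use 3 in \<open>auto simp: Bp_def\<close>)
    then show ?thesis using b by simp
  next
    case 4
    have b: "bump x = 0" "x * (1 - x) = 0" using 4 unfolding bump_def by simp_all
    show ?thesis
    proof (rule deriv_glue)
      have "(Bp has_real_derivative (x * (1 - x))) (at x within {..x})"
        by (rule has_field_derivative_transform_within[OF cubic_deriv, where d=1])
           (use 4 in \<open>auto simp: Bp_def dist_real_def\<close>)
      then show "(Bp has_real_derivative bump x) (at x within {..x})" using b by simp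
      have "((\<lambda>_. 1/6::real) has_real_derivative 0) (at x within {x..})" by simp
      then have "(Bp has_real_derivative 0) (at x within {x..})"
        by (rule has_field_derivative_transform_within[where d=1]) (use 4 in \<open>auto simp: Bp_def\<close>)
      then show "(Bp has_real_derivative bump x) (at x within {x..})" using b by simp
    qed
  next
    case 5
    have b: "bump x = 0" using 5 unfolding bump_def by (simp add: mult_pos_neg)
    have "((\<lambda>_. 1/6::real) has_real_derivative 0) (at x)" by simp
    then have "(Bp has_real_derivative 0) (at x)"
      by (rule has_field_derivative_transform_within_open[where S="{1<..}"]) (use 5 in \<open>auto simp: Bp_def\<close>)
    then show ?thesis using b by simp
  qed
qed


section \<open>Representation\<close>

definition XV :: "nat \<Rightarrow> (real vec \<Rightarrow> real) set" where
  "XV m = {(\<lambda>x. x $ i) | i. i < m}"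

definition pos :: "real \<Rightarrow> real" where "pos u = (if u > 0 then 1 else 0)"

definition rep :: "nat \<Rightarrow> (real vec \<Rightarrow> real) \<Rightarrow> bool" where
  "rep m h \<longleftrightarrow> (\<exists>cs::(real \<times> (real vec \<Rightarrow> real)) list.
      (\<forall>p\<in>set cs. snd p \<in> ISD_on (XV m)) \<and> (\<forall>x. h x = (\<Sum>p\<leftarrow>cs. fst p * pos (snd p x))))"

lemma rep_const: "rep m (\<lambda>x. a)"
  unfolding rep_def by (rule exI[of _ "[(a, \<lambda>x. 1)]"]) (auto simp: ISD_const pos_def)

lemma rep_pos: "G \<in> ISD_on (XV m) \<Longrightarrow> rep m (\<lambda>x. pos (G x))"
  unfolding rep_def by (rule exI[of _ "[(1, G)]"]) auto

lemma rep_add: assumes "rep m f" "rep m g" shows "rep m (\<lambda>x. f x + g x)"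
proof -
  obtain cs1 where c1: "\<forall>p\<in>set cs1. snd p \<in> ISD_on (XV m)" "\<forall>x. f x = (\<Sum>p\<leftarrow>cs1. fst p * pos (snd p x))"
    using assms(1) unfolding rep_def by blast
  obtain cs2 where c2: "\<forall>p\<in>set cs2. snd p \<in> ISD_on (XV m)" "\<forall>x. g x = (\<Sum>p\<leftarrow>cs2. fst p * pos (snd p x))"
    using assms(2) unfolding rep_def by blast
  show ?thesis unfolding rep_def
    by (rule exI[of _ "cs1 @ cs2"]) (use c1 c2 in auto)
qed

lemma rep_cmult: assumes "rep m f" shows "rep m (\<lambda>x. a * f x)"
proof -
  obtain cs1 where c1: "\<forall>p\<in>set cs1. snd p \<in> ISD_on (XV m)" "\<forall>x. f x = (\<Sum>p\<leftarrow>cs1. fst p * pos (snd p x))"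
    using assms(1) unfolding rep_def by blast
  have "\<forall>x. a * f x = (\<Sum>p\<leftarrow>map (\<lambda>p. (a * fst p, snd p)) cs1. fst p * pos (snd p x))"
    using c1(2) by (simp add: o_def sum_list_const_mult mult.assoc)
  then show ?thesis unfolding rep_def
    by (intro exI[of _ "map (\<lambda>p. (a * fst p, snd p)) cs1"]) (use c1 in auto)
qed

lemma pos_min: "pos (min u v) = pos u * pos v"
  unfolding pos_def by auto

lemma sum_list_prod_expand:
  "(\<Sum>p\<leftarrow>cs1. fst p * pos (snd p x)) * (\<Sum>q\<leftarrow>cs2. fst q * pos (snd q x)) =
   (\<Sum>r\<leftarrow>concat (map (\<lambda>p. map (\<lambda>q. (fst p * fst q, \<lambda>y. min (snd p y) (snd q y))) cs2) cs1).
       fst r * pos (snd r x))"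
proof (induction cs1)
  case Nil
  then show ?case by simp
next
  case (Cons a cs1)
  have "(\<Sum>q\<leftarrow>cs2. fst a * fst q * pos (min (snd a x) (snd q x))) =
        fst a * pos (snd a x) * (\<Sum>q\<leftarrow>cs2. fst q * pos (snd q x))"
    by (simp add: pos_min sum_list_const_mult[symmetric] mult_ac)
  then show ?case using Cons by (simp add: distrib_right o_def)
qed

lemma rep_mult: assumes "rep m f" "rep m g" shows "rep m (\<lambda>x. f x * g x)"
proof -
  obtain cs1 where c1: "\<forall>p\<in>set cs1. snd p \<in> ISD_on (XV m)" "\<forall>x. f x = (\<Sum>p\<leftarrow>cs1. fst p * pos (snd p x))"
    using assms(1) unfolding rep_def by blast
  obtain cs2 where c2: "\<forall>p\<in>set cs2. snd p \<in> ISD_on (XV m)" "\<forall>x. g x = (\<Sum>p\<leftarrow>cs2. fst p * pos (snd p x))"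
    using assms(2) unfolding rep_def by blast
  show ?thesis unfolding rep_def
  proof (intro exI[of _ "concat (map (\<lambda>p. map (\<lambda>q. (fst p * fst q, \<lambda>y. min (snd p y) (snd q y))) cs2) cs1)"] conjI)
    show "\<forall>p\<in>set (concat (map (\<lambda>p. map (\<lambda>q. (fst p * fst q, \<lambda>y. min (snd p y) (snd q y))) cs2) cs1)).
       snd p \<in> ISD_on (XV m)" using c1(1) c2(1) by (auto intro: ISD_on.min)
    show "\<forall>x. f x * g x = (\<Sum>r\<leftarrow>concat (map (\<lambda>p. map (\<lambda>q. (fst p * fst q, \<lambda>y. min (snd p y) (snd q y))) cs2) cs1).
       fst r * pos (snd r x))" using c1(2) c2(2) sum_list_prod_expand by metis
  qed
qed

lemma rep_prod: "finite A \<Longrightarrow> (\<And>a. a \<in> A \<Longrightarrow> rep m (f a)) \<Longrightarrow> rep m (\<lambda>x. \<Prod>a\<in>A. f a x)"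
proof (induction A rule: finite_induct)
  case empty
  then show ?case by (simp add: rep_const)
next
  case (insert a A)
  then have "rep m (\<lambda>x. f a x * (\<Prod>a\<in>A. f a x))" by (intro rep_mult) auto
  then show ?case using insert by simp
qed

lemma prod01: "finite A \<Longrightarrow> (\<Prod>a\<in>A. if P a then 1 else 0) = (if \<forall>a\<in>A. P a then 1 else (0::real))"
  by (induction A rule: finite_induct) auto

lemma semialg_rep:
  assumes "semialgebraic m S"
  shows "\<exists>cs::(real \<times> (real vec \<Rightarrow> real)) list. (\<forall>p\<in>set cs. snd p \<in> ISD_on (XV m)) \<and>
     (\<forall>x\<in>carrier_vec m. (if x \<in> S then 1 else 0) = (\<Sum>p\<leftarrow>cs. fst p * pos (snd p x)))"
proof -
  obtain F :: "((real vec \<Rightarrow> real) set \<times> (real vec \<Rightarrow> real) set) set" where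
    F: "finite F" "\<forall>(P, Q) \<in> F. finite P \<and> finite Q \<and> P \<subseteq> polys m \<and> Q \<subseteq> polys m"
    and S: "S = (\<Union>(P, Q) \<in> F. {x \<in> carrier_vec m. (\<forall>p\<in>P. p x = 0) \<and> (\<forall>q\<in>Q. q x > 0)})"
    using assms unfolding semialgebraic_def by blast
  have pI: "p \<in> ISD_on (XV m)" if "p \<in> polys m" for p
    using that unfolding polys_def XV_def by (rule ISD_on.poly)
  have pp: "(\<lambda>x. p x * p x) \<in> ISD_on (XV m)" if "p \<in> polys m" for p
    using that unfolding polys_def XV_def by (intro ISD_on.poly polys_on.mult)
  define chiB where "chiB = (\<lambda>(PQ :: (real vec \<Rightarrow> real) set \<times> (real vec \<Rightarrow> real) set) x.
     (\<Prod>p\<in>fst PQ. 1 - pos (p x * p x)) * (\<Prod>q\<in>snd PQ. pos (q x)))"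
  have repB: "rep m (chiB PQ)" if "PQ \<in> F" for PQ
  proof -
    obtain P Q where PQ: "PQ = (P, Q)" by fastforce
    have fin: "finite P" "finite Q" "P \<subseteq> polys m" "Q \<subseteq> polys m" using F(2) that PQ by auto
    have "rep m (\<lambda>x. 1 - pos (p x * p x))" if "p \<in> P" for p
    proof -
      have "rep m (\<lambda>x. 1 + (-1) * pos (p x * p x))"
        using that fin by (intro rep_add rep_const rep_cmult rep_pos pp) auto
      then show ?thesis by simp
    qed
    then have r1: "rep m (\<lambda>x. \<Prod>p\<in>P. 1 - pos (p x * p x))" using fin by (intro rep_prod) auto
    have r2: "rep m (\<lambda>x. \<Prod>q\<in>Q. pos (q x))" using fin by (intro rep_prod rep_pos pI) auto
    have "rep m (\<lambda>x. (\<Prod>p\<in>P. 1 - pos (p x * p x)) * (\<Prod>q\<in>Q. pos (q x)))" by (rule rep_mult[OF r1 r2])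
    then show ?thesis unfolding chiB_def PQ by simp
  qed
  define h where "h = (\<lambda>x. 1 + (-1) * (\<Prod>PQ\<in>F. 1 + (-1) * chiB PQ x))"
  have "rep m h" unfolding h_def
    by (intro rep_add rep_const rep_cmult rep_prod F(1) repB)
  then obtain cs where cs: "\<forall>p\<in>set cs. snd p \<in> ISD_on (XV m)" "\<forall>x. h x = (\<Sum>p\<leftarrow>cs. fst p * pos (snd p x))"
    unfolding rep_def by blast
  have chiB_eq: "chiB (P, Q) x = (if (\<forall>p\<in>P. p x = 0) \<and> (\<forall>q\<in>Q. q x > 0) then 1 else 0)"
    if "(P, Q) \<in> F" for P Q x
  proof -
    have fin: "finite P" "finite Q" using F(2) that by auto
    have "(\<Prod>p\<in>P. 1 - pos (p x * p x)) = (\<Prod>p\<in>P. if p x = 0 then 1 else 0)"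
      by (rule prod.cong) (auto simp: pos_def)
    also have "\<dots> = (if \<forall>p\<in>P. p x = 0 then 1 else 0)" using fin(1) by (rule prod01)
    finally have a: "(\<Prod>p\<in>P. 1 - pos (p x * p x)) = (if \<forall>p\<in>P. p x = 0 then 1 else 0)" .
    have "(\<Prod>q\<in>Q. pos (q x)) = (\<Prod>q\<in>Q. if q x > 0 then 1 else 0)"
      by (rule prod.cong) (auto simp: pos_def)
    also have "\<dots> = (if \<forall>q\<in>Q. q x > 0 then 1 else 0)" using fin by (intro prod01)
    finally have b: "(\<Prod>q\<in>Q. pos (q x)) = (if \<forall>q\<in>Q. q x > 0 then 1 else 0)" .
    show ?thesis unfolding chiB_def using a b by simp
  qed
  have "(if x \<in> S then 1 else 0) = h x" if x: "x \<in> carrier_vec m" for x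
  proof -
    define cond where "cond = (\<lambda>PQ::(real vec \<Rightarrow> real) set \<times> (real vec \<Rightarrow> real) set. (\<forall>p\<in>fst PQ. p x = 0) \<and> (\<forall>q\<in>snd PQ. q x > 0))"
    have "(\<Prod>PQ\<in>F. 1 + (-1) * chiB PQ x) = (\<Prod>PQ\<in>F. if \<not> cond PQ then 1 else (0::real))"
      by (rule prod.cong) (auto simp: chiB_eq cond_def)
    also have "\<dots> = (if \<forall>PQ\<in>F. \<not> cond PQ then 1 else 0)" using F(1) by (rule prod01)
    finally have e0: "(\<Prod>PQ\<in>F. 1 + (-1) * chiB PQ x) = (if \<forall>PQ\<in>F. \<not> cond PQ then 1 else 0)" .
    have e: "h x = (if \<exists>PQ\<in>F. cond PQ then 1 else 0)" unfolding h_def e0 by simp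
    have "x \<in> S \<longleftrightarrow> (\<exists>PQ\<in>F. cond PQ)" unfolding S cond_def using x by (simp add: split_beta)
    then show ?thesis using e by simp
  qed
  then show ?thesis using cs by metis
qed

definition M2 :: "real \<Rightarrow> real \<Rightarrow> real mat" where
  "M2 Q P = mat 2 2 (\<lambda>(i,j). if i = 0 then (if j = 0 then 1 else 0) else (if j = 0 then - Q else P))"

lemma sum2: "(\<Sum>k\<in>{0..<2::nat}. f k) = f 0 + (f 1::real)"
  by (simp add: numeral_2_eq_2)

lemma M2_entries: "i < 2 \<Longrightarrow> j < 2 \<Longrightarrow> M2 Q P $$ (i,j) = (if i = 0 then (if j = 0 then 1 else 0) else (if j = 0 then - Q else P))"
  "dim_row (M2 Q P) = 2" "dim_col (M2 Q P) = 2"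
  by (auto simp: M2_def)

lemma M2_mult_vec: "(M2 Q P *\<^sub>v v) $ 0 = v $ 0" "(M2 Q P *\<^sub>v v) $ 1 = - Q * v $ 0 + P * v $ 1"
  if "dim_vec v = 2"
  using that by (auto simp: scalar_prod_def sum2 M2_entries)

lemma M2_not_inv: "\<not> invertible_mat (M2 Q 0)"
proof
  assume "invertible_mat (M2 Q 0)"
  then obtain B where B1: "M2 Q 0 * B = 1\<^sub>m 2" and B2: "B * M2 Q 0 = 1\<^sub>m (dim_row B)"
    unfolding invertible_mat_def inverts_mat_def by (auto simp: M2_entries)
  have dc: "dim_col B = 2" using arg_cong[OF B1, of dim_col] by simp
  have dr: "dim_row B = 2" using arg_cong[OF B2, of dim_col] by (simp add: M2_entries)
  have "(B * M2 Q 0) $$ (1,1) = 1" using B2 dr by simp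
  moreover have "(B * M2 Q 0) $$ (1,1) = 0"
    using dr dc by (simp add: scalar_prod_def sum2 M2_entries)
  ultimately show False by simp
qed

lemma M2_inv: assumes "P \<noteq> 0" shows "invertible_mat (M2 Q P)"
proof -
  define B where "B = mat 2 2 (\<lambda>(i,j). if i = 0 then (if j = 0 then 1 else 0) else (if j = 0 then Q / P else 1 / P))"
  have Be: "i < 2 \<Longrightarrow> j < 2 \<Longrightarrow> B $$ (i,j) = (if i = 0 then (if j = 0 then 1 else 0) else (if j = 0 then Q / P else 1 / P))"
    "dim_row B = 2" "dim_col B = 2" for i j by (auto simp: B_def)
  have lt2: "i < 2 \<Longrightarrow> i = 0 \<or> i = 1" for i :: nat by auto
  have "M2 Q P * B = 1\<^sub>m 2"
  proof (rule eq_matI)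
    fix i j assume "i < dim_row (1\<^sub>m 2 :: real mat)" "j < dim_col (1\<^sub>m 2 :: real mat)"
    then have "i = 0 \<or> i = 1" "j = 0 \<or> j = 1" by auto
    then show "(M2 Q P * B) $$ (i, j) = 1\<^sub>m 2 $$ (i, j)"
      using assms by (auto simp: scalar_prod_def sum2 M2_entries Be field_simps)
  qed (auto simp: M2_entries Be)
  moreover have "B * M2 Q P = 1\<^sub>m 2"
  proof (rule eq_matI)
    fix i j assume "i < dim_row (1\<^sub>m 2 :: real mat)" "j < dim_col (1\<^sub>m 2 :: real mat)"
    then have "i = 0 \<or> i = 1" "j = 0 \<or> j = 1" by auto
    then show "(B * M2 Q P) $$ (i, j) = 1\<^sub>m 2 $$ (i, j)"
      using assms by (auto simp: scalar_prod_def sum2 M2_entries Be field_simps)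
  qed (auto simp: M2_entries Be)
  ultimately show ?thesis
    unfolding invertible_mat_def inverts_mat_def square_mat.simps using Be M2_entries by metis
qed

lemma clamp_sol_M2:
  "clamp_sol c (M2 Q P) (vec 2 (\<lambda>i. if i = 0 then ph else 0)) =
     (if P = 0 then 0\<^sub>v 2 else vec 2 (\<lambda>i. clamp c (if i = 0 then ph else Q * ph / P)))"
proof (cases "P = 0")
  case True
  then show ?thesis using M2_not_inv[of Q] by (simp add: clamp_sol_def)
next
  case False
  define v0 :: "real vec" where "v0 = vec 2 (\<lambda>i. if i = 0 then ph else Q * ph / P)"
  have the: "(THE v. v \<in> carrier_vec (dim_col (M2 Q P)) \<and> M2 Q P *\<^sub>v v = vec 2 (\<lambda>i. if i = 0 then ph else 0)) = v0"
  proof (rule the_equality)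
    show "v0 \<in> carrier_vec (dim_col (M2 Q P)) \<and> M2 Q P *\<^sub>v v0 = vec 2 (\<lambda>i. if i = 0 then ph else 0)"
    proof
      show "v0 \<in> carrier_vec (dim_col (M2 Q P))" by (simp add: v0_def M2_entries)
      show "M2 Q P *\<^sub>v v0 = vec 2 (\<lambda>i. if i = 0 then ph else 0)"
      proof (rule eq_vecI)
        fix i assume "i < dim_vec (vec 2 (\<lambda>i. if i = 0 then ph else (0::real)))"
        then have "i = 0 \<or> i = 1" by auto
        then show "(M2 Q P *\<^sub>v v0) $ i = vec 2 (\<lambda>i. if i = 0 then ph else 0) $ i"
          using False M2_mult_vec[of v0 Q P] by (auto simp: v0_def)
      qed (simp add: M2_entries)
    qed
    fix v assume v: "v \<in> carrier_vec (dim_col (M2 Q P)) \<and> M2 Q P *\<^sub>v v = vec 2 (\<lambda>i. if i = 0 then ph else 0)"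
    then have d: "dim_vec v = 2" by (simp add: M2_entries)
    have e0: "v $ 0 = ph" using M2_mult_vec(1)[OF d, of Q P] v by simp
    have e1: "- Q * v $ 0 + P * v $ 1 = 0" using M2_mult_vec(2)[OF d, of Q P] v by simp
    have e1': "v $ 1 = Q * ph / P" using e0 e1 False by (simp add: field_simps)
    show "v = v0"
    proof (rule eq_vecI)
      fix i assume "i < dim_vec v0"
      then have "i = 0 \<or> i = 1" by (auto simp: v0_def)
      then show "v $ i = v0 $ i" using e0 e1' by (auto simp: v0_def)
    qed (simp add: d v0_def)
  qed
  show ?thesis
    using False M2_inv[OF False, of Q] unfolding clamp_sol_def the
    by (intro eq_vecI) (auto simp: v0_def)
qed

section \<open>Phases\<close>

type_synonym clist = "(real \<times> (real vec \<Rightarrow> real)) list"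

definition hh :: "clist \<Rightarrow> real" where "hh cs = 1 / (2 * real (length cs))"
definition kap :: "clist \<Rightarrow> real" where "kap cs = 6 / hh cs"
definition upf :: "clist \<Rightarrow> nat \<Rightarrow> real \<Rightarrow> real" where
  "upf cs k s = bump ((s - 2 * real k * hh cs) / hh cs)"
definition dnf :: "clist \<Rightarrow> nat \<Rightarrow> real \<Rightarrow> real" where
  "dnf cs k s = bump ((s - (2 * real k + 1) * hh cs) / hh cs)"
definition Pf :: "clist \<Rightarrow> real vec \<Rightarrow> real \<Rightarrow> real" where
  "Pf cs x s = (\<Sum>k<length cs. min (max (snd (cs!k) x) 0) (upf cs k s + dnf cs k s))"
definition Qf :: "clist \<Rightarrow> real vec \<Rightarrow> real \<Rightarrow> real" where
  "Qf cs x s = (\<Sum>k<length cs. min (max (snd (cs!k) x) 0) (upf cs k s))"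
definition Phi :: "clist \<Rightarrow> real \<Rightarrow> real" where
  "Phi cs s = (\<Sum>k<length cs. kap cs * fst (cs!k) * (upf cs k s - dnf cs k s))"
definition Dr :: "clist \<Rightarrow> real vec \<Rightarrow> real \<Rightarrow> real" where
  "Dr cs x s = (\<Sum>k<length cs. if snd (cs!k) x > 0 then kap cs * fst (cs!k) * (upf cs k s - dnf cs k s) else 0)"
definition Dt :: "clist \<Rightarrow> real vec \<Rightarrow> real \<Rightarrow> real" where
  "Dt cs x s = (\<Sum>k<length cs. if snd (cs!k) x > 0 then kap cs * fst (cs!k) * upf cs k s else 0)"
definition Bnd :: "clist \<Rightarrow> real" where
  "Bnd cs = kap cs * (\<Sum>k<length cs. \<bar>fst (cs!k)\<bar>)"

lemma bump_nonneg: "bump \<sigma> \<ge> 0" by (simp add: bump_def)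
lemma bump_le: "bump \<sigma> \<le> 1/4"
proof -
  have "0 \<le> (\<sigma> - 1/2) * (\<sigma> - 1/2)" by simp
  then have "0 \<le> \<sigma> * \<sigma> - \<sigma> + 1/4" by (simp add: algebra_simps)
  moreover have "\<sigma> * (1 - \<sigma>) = \<sigma> - \<sigma> * \<sigma>" by (simp add: algebra_simps)
  ultimately have "\<sigma> * (1 - \<sigma>) \<le> 1/4" by linarith
  then show ?thesis by (simp add: bump_def)
qed
lemma bump_pos: "bump \<sigma> > 0 \<Longrightarrow> 0 < \<sigma> \<and> \<sigma> < 1"
proof -
  assume "bump \<sigma> > 0"
  then have "\<sigma> * (1 - \<sigma>) > 0" by (simp add: bump_def less_max_iff_disj)
  then show ?thesis by (auto simp: zero_less_mult_iff)
qed

lemma hh_pos: "k < length cs \<Longrightarrow> hh cs > 0"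
proof -
  assume "k < length cs"
  then have "real (length cs) > 0" by (simp del: length_greater_0_conv)
  then show ?thesis by (simp add: hh_def)
qed

lemma kap_nonneg: "kap cs \<ge> 0" by (simp add: kap_def hh_def)

lemma upf_supp: assumes "k < length cs" "upf cs k s > 0"
  shows "2 * real k * hh cs < s \<and> s < (2 * real k + 1) * hh cs"
proof -
  have h: "hh cs > 0" using hh_pos[OF assms(1)] .
  have "0 < (s - 2 * real k * hh cs) / hh cs \<and> (s - 2 * real k * hh cs) / hh cs < 1"
    using bump_pos assms(2) unfolding upf_def by blast
  then show ?thesis using h by (simp add: field_simps)
qed

lemma dnf_supp: assumes "k < length cs" "dnf cs k s > 0"
  shows "(2 * real k + 1) * hh cs < s \<and> s < (2 * real k + 2) * hh cs"
proof -
  have h: "hh cs > 0" using hh_pos[OF assms(1)] .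
  have "0 < (s - (2 * real k + 1) * hh cs) / hh cs \<and> (s - (2 * real k + 1) * hh cs) / hh cs < 1"
    using bump_pos assms(2) unfolding dnf_def by blast
  then show ?thesis using h by (simp add: field_simps)
qed

lemma e_supp: assumes "k < length cs" "upf cs k s + dnf cs k s > 0"
  shows "2 * real k * hh cs < s \<and> s < (2 * real k + 2) * hh cs"
proof -
  have "upf cs k s > 0 \<or> dnf cs k s > 0"
    using assms(2) bump_nonneg[of "(s - 2 * real k * hh cs) / hh cs"] bump_nonneg[of "(s - (2 * real k + 1) * hh cs) / hh cs"]
    unfolding upf_def dnf_def by linarith
  then show ?thesis using upf_supp[OF assms(1)] dnf_supp[OF assms(1)] hh_pos[OF assms(1)]
    by (smt (verit) mult_right_mono)
qed

lemma e_disj: assumes "k < length cs" "j < length cs" "upf cs k s + dnf cs k s > 0" "upf cs j s + dnf cs j s > 0"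
  shows "k = j"
proof -
  have h: "hh cs > 0" using hh_pos[OF assms(1)] .
  have a: "2 * real k * hh cs < (2 * real j + 2) * hh cs" using e_supp[OF assms(1,3)] e_supp[OF assms(2,4)] by linarith
  have b: "2 * real j * hh cs < (2 * real k + 2) * hh cs" using e_supp[OF assms(1,3)] e_supp[OF assms(2,4)] by linarith
  have "2 * real k < 2 * real j + 2" using a h by (simp add: mult_less_cancel_right_pos)
  then have "real k < real (j + 1)" by simp
  then have "k \<le> j" by simp
  moreover have "2 * real j < 2 * real k + 2" using b h by (simp add: mult_less_cancel_right_pos)
  then have "real j < real (k + 1)" by simp
  then have "j \<le> k" by simp
  ultimately show ?thesis by simp
qed

lemma up_dn: assumes "k < length cs" "upf cs k s > 0" shows "dnf cs k s = 0"
proof (rule ccontr)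
  assume "dnf cs k s \<noteq> 0"
  then have "dnf cs k s > 0" using bump_nonneg unfolding dnf_def by (simp add: order_less_le)
  then show False using upf_supp[OF assms] dnf_supp[OF assms(1) \<open>dnf cs k s > 0\<close>] by linarith
qed

lemma sum_single: assumes "(k0::nat) < K" "\<And>k. k < K \<Longrightarrow> k \<noteq> k0 \<Longrightarrow> f k = 0"
  shows "(\<Sum>k<K. f k) = (f k0 :: real)"
proof -
  have "(\<Sum>k<K. f k) = f k0 + (\<Sum>k\<in>{..<K} - {k0}. f k)"
    using assms(1) by (simp add: sum.remove)
  also have "(\<Sum>k\<in>{..<K} - {k0}. f k) = 0" using assms(2) by (intro sum.neutral) auto
  finally show ?thesis by simp
qed

lemma key:
  "(Pf cs x s = 0 \<longrightarrow> Dr cs x s = 0 \<and> Dt cs x s = 0) \<and>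
   (Pf cs x s \<noteq> 0 \<longrightarrow> Phi cs s = Dr cs x s \<and> Qf cs x s * Phi cs s / Pf cs x s = Dt cs x s \<and>
       \<bar>Dr cs x s\<bar> \<le> Bnd cs \<and> \<bar>Dt cs x s\<bar> \<le> Bnd cs)"
proof (cases "\<exists>k0<length cs. upf cs k0 s + dnf cs k0 s > 0")
  case False
  have z: "upf cs k s = 0" "dnf cs k s = 0" if "k < length cs" for k
  proof -
    have "upf cs k s + dnf cs k s \<le> 0" using False that by (meson not_less)
    then show "upf cs k s = 0" "dnf cs k s = 0" using bump_nonneg unfolding upf_def dnf_def
      by (smt (verit))+
  qed
  have "Pf cs x s = 0" unfolding Pf_def by (intro sum.neutral) (auto simp: z)
  moreover have "Dr cs x s = 0" unfolding Dr_def by (intro sum.neutral) (auto simp: z)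
  moreover have "Dt cs x s = 0" unfolding Dt_def by (intro sum.neutral) (auto simp: z)
  ultimately show ?thesis by simp
next
  case True
  then obtain k0 where k0: "k0 < length cs" "upf cs k0 s + dnf cs k0 s > 0" by blast
  have z: "upf cs k s = 0" "dnf cs k s = 0" if "k < length cs" "k \<noteq> k0" for k
  proof -
    have "\<not> upf cs k s + dnf cs k s > 0" using e_disj[OF that(1) k0(1) _ k0(2)] that(2) by blast
    then show "upf cs k s = 0" "dnf cs k s = 0" using bump_nonneg unfolding upf_def dnf_def
      by (smt (verit))+
  qed
  define G where "G = snd (cs!k0) x"
  define c where "c = fst (cs!k0)"
  define u where "u = upf cs k0 s"
  define d where "d = dnf cs k0 s"
  have u0: "u \<ge> 0" "u \<le> 1/4" "d \<ge> 0" "d \<le> 1/4" unfolding u_def d_def upf_def dnf_def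
    using bump_nonneg bump_le by auto
  have P: "Pf cs x s = min (max G 0) (u + d)" unfolding Pf_def G_def u_def d_def
    by (rule sum_single[OF k0(1)]) (auto simp: z)
  have Q: "Qf cs x s = min (max G 0) u" unfolding Qf_def G_def u_def
    by (rule sum_single[OF k0(1)]) (auto simp: z)
  have Ph: "Phi cs s = kap cs * c * (u - d)" unfolding Phi_def c_def u_def d_def
    by (rule sum_single[OF k0(1)]) (auto simp: z)
  have R: "Dr cs x s = (if G > 0 then kap cs * c * (u - d) else 0)" unfolding Dr_def G_def c_def u_def d_def
    by (rule sum_single[OF k0(1)]) (auto simp: z)
  have T: "Dt cs x s = (if G > 0 then kap cs * c * u else 0)" unfolding Dt_def G_def c_def u_def
    by (rule sum_single[OF k0(1)]) (auto simp: z)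
  have cb: "\<bar>c\<bar> \<le> (\<Sum>k<length cs. \<bar>fst (cs!k)\<bar>)" unfolding c_def
    using k0(1) by (intro member_le_sum) auto
  have kc: "\<bar>kap cs * c\<bar> \<le> Bnd cs" unfolding Bnd_def using kap_nonneg[of cs] cb
    by (simp add: abs_mult mult_left_mono)
  show ?thesis
  proof (cases "G > 0")
    case False
    then have "Pf cs x s = 0" using P u0 by simp
    then show ?thesis using R T False by simp
  next
    case True
    have Ppos: "Pf cs x s > 0" using P True k0(2) u_def d_def by simp
    have ud: "\<bar>u - d\<bar> \<le> 1" "\<bar>u\<bar> \<le> 1" using u0 by auto
    have B0: "0 \<le> Bnd cs" using kc by linarith
    have "\<bar>kap cs * c\<bar> * \<bar>u - d\<bar> \<le> Bnd cs * 1" by (rule mult_mono[OF kc ud(1) B0]) simp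
    then have b1: "\<bar>kap cs * c * (u - d)\<bar> \<le> Bnd cs" by (simp only: abs_mult mult_1_right)
    have "\<bar>kap cs * c\<bar> * \<bar>u\<bar> \<le> Bnd cs * 1" by (rule mult_mono[OF kc ud(2) B0]) simp
    then have b2: "\<bar>kap cs * c * u\<bar> \<le> Bnd cs" by (simp only: abs_mult mult_1_right)
    have QT: "Qf cs x s * Phi cs s / Pf cs x s = Dt cs x s"
    proof (cases "u > 0")
      case True
      then have "d = 0" using up_dn[OF k0(1)] u_def d_def by simp
      then have "Qf cs x s = Pf cs x s" using P Q by simp
      then show ?thesis using Ppos Ph T \<open>G > 0\<close> \<open>d = 0\<close> by simp
    next
      case False
      then have "u = 0" using u0 by simp
      then show ?thesis using Q T \<open>G > 0\<close> by simp
    qed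
    show ?thesis using Ppos Ph R T QT True b1 b2 by simp
  qed
qed



definition NN :: "clist \<Rightarrow> isdnet" where
  "NN cs = ((\<lambda>i j. if i = 0 then (if j = 0 then (\<lambda>_. 1) else (\<lambda>_. 0))
                   else if j = 0 then (\<lambda>w. - Qf cs (fst w) (snd (snd w))) else (\<lambda>w. Pf cs (fst w) (snd (snd w)))),
            (\<lambda>i. if i = 0 then (\<lambda>w. Phi cs (snd (snd w))) else (\<lambda>_. 0)))"

lemma netM_NN: "net_M 1 (NN cs) x z s = M2 (Qf cs x s) (Pf cs x s)"
  unfolding net_M_def M2_def NN_def one_add_one by (intro arg_cong[where f="mat 2 2"]) (auto simp: fun_eq_iff)

lemma netb_NN: "net_b 1 (NN cs) x z s = vec 2 (\<lambda>i. if i = 0 then Phi cs s else 0)"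
  unfolding net_b_def NN_def one_add_one by (intro arg_cong[where f="vec 2"]) (auto simp: fun_eq_iff)

lemma sv_poly: "(\<lambda>w::net_input. snd (snd w)) \<in> polys_on (net_vars m n)"
proof -
  have "(\<lambda>(x, z, s). s) \<in> net_vars m n" unfolding net_vars_def by auto
  then have "(\<lambda>(x::real vec, z::real vec, s::real). s) \<in> polys_on (net_vars m n)" by (rule polys_on.var)
  moreover have "(\<lambda>(x::real vec, z::real vec, s::real). s) = (\<lambda>w. snd (snd w))" by (auto simp: fun_eq_iff)
  ultimately show ?thesis by simp
qed

lemma ISD_bump_s: "(\<lambda>w::net_input. bump ((snd (snd w) - a) / h)) \<in> ISD_on (net_vars m n)"
proof -
  have p: "(\<lambda>w::net_input. snd (snd w) * (1/h) + (- a / h)) \<in> polys_on (net_vars m n)"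
    by (intro polys_on.add polys_on.mult polys_on.const sv_poly)
  have "(\<lambda>w::net_input. (snd (snd w) * (1/h) + (- a / h)) * (1 - (snd (snd w) * (1/h) + (- a / h)))) \<in> polys_on (net_vars m n)"
    by (intro polys_on.mult polys_on_minus p polys_on.const)
  then have "(\<lambda>w::net_input. max ((\<lambda>_. 0) w) ((snd (snd w) * (1/h) + (- a / h)) * (1 - (snd (snd w) * (1/h) + (- a / h))))) \<in> ISD_on (net_vars m n)"
    by (intro ISD_on.max ISD_on.poly polys_on.const)
  moreover have "(\<lambda>w::net_input. max ((\<lambda>_. 0) w) ((snd (snd w) * (1/h) + (- a / h)) * (1 - (snd (snd w) * (1/h) + (- a / h))))) =
     (\<lambda>w::net_input. bump ((snd (snd w) - a) / h))" by (auto simp: fun_eq_iff bump_def diff_divide_distrib)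
  ultimately show ?thesis by simp
qed

lemma ISD_liftG: assumes "G \<in> ISD_on (XV m)" shows "(\<lambda>w::net_input. G (fst w)) \<in> ISD_on (net_vars m n)"
proof (rule ISD_comp[OF _ assms])
  fix v assume "v \<in> XV m"
  then obtain i where i: "i < m" "v = (\<lambda>x. x $ i)" unfolding XV_def by blast
  have "(\<lambda>(x, z, s). x $ i) \<in> net_vars m n" unfolding net_vars_def using i by auto
  then have "(\<lambda>(x::real vec, z::real vec, s::real). x $ i) \<in> polys_on (net_vars m n)" by (rule polys_on.var)
  moreover have "(\<lambda>(x::real vec, z::real vec, s::real). x $ i) = (\<lambda>w. v (fst w))" using i by (auto simp: fun_eq_iff)
  ultimately show "(\<lambda>w. v (fst w)) \<in> polys_on (net_vars m n)" by simp
qed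

lemma ISD_NN:
  assumes cs: "\<forall>p\<in>set cs. snd p \<in> ISD_on (XV m)"
  shows "is_ISDnet m 1 (NN cs)"
proof -
  have G: "(\<lambda>w::net_input. max (snd (cs!k) (fst w)) ((\<lambda>_. 0) w)) \<in> ISD_on (net_vars m 1)" if "k < length cs" for k
    using cs that by (intro ISD_on.max ISD_liftG ISD_const) auto
  have up: "(\<lambda>w::net_input. upf cs k (snd (snd w))) \<in> ISD_on (net_vars m n)" for k n
    unfolding upf_def by (rule ISD_bump_s)
  have dn: "(\<lambda>w::net_input. dnf cs k (snd (snd w))) \<in> ISD_on (net_vars m n)" for k n
    unfolding dnf_def by (rule ISD_bump_s)
  have P: "(\<lambda>w::net_input. Pf cs (fst w) (snd (snd w))) \<in> ISD_on (net_vars m 1)"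
    unfolding Pf_def
    by (rule ISD_sum[where f="\<lambda>k w. min (max (snd (cs!k) (fst w)) 0) (upf cs k (snd (snd w)) + dnf cs k (snd (snd w)))"])
       (use G in \<open>auto intro!: ISD_on.min ISD_add up dn\<close>)
  have Q: "(\<lambda>w::net_input. Qf cs (fst w) (snd (snd w))) \<in> ISD_on (net_vars m 1)"
    unfolding Qf_def
    by (rule ISD_sum[where f="\<lambda>k w. min (max (snd (cs!k) (fst w)) 0) (upf cs k (snd (snd w)))"])
       (use G in \<open>auto intro!: ISD_on.min up\<close>)
  have Ph: "(\<lambda>w::net_input. Phi cs (snd (snd w))) \<in> ISD_on (net_vars m 1)"
    unfolding Phi_def
    by (rule ISD_sum[where f="\<lambda>k w. kap cs * fst (cs!k) * (upf cs k (snd (snd w)) - dnf cs k (snd (snd w)))"])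
       (auto intro!: ISD_cmult ISD_minus up dn simp: mult.assoc)
  have nQ: "(\<lambda>w::net_input. - Qf cs (fst w) (snd (snd w))) \<in> ISD_on (net_vars m 1)"
    by (rule ISD_neg[OF Q])
  show ?thesis unfolding is_ISDnet_def NN_def
    using P nQ Ph by (auto simp: ISD_const)
qed



definition Rp :: "clist \<Rightarrow> real vec \<Rightarrow> real \<Rightarrow> real" where
  "Rp cs x s = (\<Sum>k<length cs. if snd (cs!k) x > 0 then kap cs * fst (cs!k) * hh cs *
      (Bp ((s - 2 * real k * hh cs) / hh cs) - Bp ((s - (2 * real k + 1) * hh cs) / hh cs)) else 0)"
definition Tp :: "clist \<Rightarrow> real vec \<Rightarrow> real \<Rightarrow> real" where
  "Tp cs x s = (\<Sum>k<length cs. if snd (cs!k) x > 0 then kap cs * fst (cs!k) * hh cs *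
      Bp ((s - 2 * real k * hh cs) / hh cs) else 0)"

lemma Bp_comp: assumes "h \<noteq> 0"
  shows "((\<lambda>s. Bp ((s - a) / h)) has_real_derivative bump ((s - a) / h) * (1 / h)) (at s)"
proof (rule DERIV_chain2[OF Bp_deriv])
  show "((\<lambda>s. (s - a) / h) has_real_derivative 1 / h) (at s)"
    using assms by (auto intro!: derivative_eq_intros)
qed

lemma Rp_deriv: "(Rp cs x has_real_derivative Dr cs x s) (at s)"
proof -
  have "((\<lambda>s. Rp cs x s) has_real_derivative Dr cs x s) (at s)"
    unfolding Rp_def Dr_def
  proof (rule DERIV_sum)
    fix k assume "k \<in> {..<length cs}"
    then have h: "hh cs \<noteq> 0" using hh_pos[of k cs] by simp
    show "((\<lambda>s. if snd (cs!k) x > 0 then kap cs * fst (cs!k) * hh cs *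
      (Bp ((s - 2 * real k * hh cs) / hh cs) - Bp ((s - (2 * real k + 1) * hh cs) / hh cs)) else 0)
      has_real_derivative (if snd (cs!k) x > 0 then kap cs * fst (cs!k) * (upf cs k s - dnf cs k s) else 0)) (at s)"
    proof (cases "snd (cs!k) x > 0")
      case True
      have "((\<lambda>s. kap cs * fst (cs!k) * hh cs *
        (Bp ((s - 2 * real k * hh cs) / hh cs) - Bp ((s - (2 * real k + 1) * hh cs) / hh cs)))
        has_real_derivative kap cs * fst (cs!k) * hh cs * (bump ((s - 2 * real k * hh cs) / hh cs) * (1 / hh cs)
           - bump ((s - (2 * real k + 1) * hh cs) / hh cs) * (1 / hh cs))) (at s)"
        by (intro DERIV_cmult DERIV_diff Bp_comp h)
      moreover have "kap cs * fst (cs!k) * hh cs * (bump ((s - 2 * real k * hh cs) / hh cs) * (1 / hh cs)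
           - bump ((s - (2 * real k + 1) * hh cs) / hh cs) * (1 / hh cs)) = kap cs * fst (cs!k) * (upf cs k s - dnf cs k s)"
        using h by (simp add: upf_def dnf_def field_simps)
      ultimately have "((\<lambda>s. kap cs * fst (cs!k) * hh cs *
        (Bp ((s - 2 * real k * hh cs) / hh cs) - Bp ((s - (2 * real k + 1) * hh cs) / hh cs)))
        has_real_derivative kap cs * fst (cs!k) * (upf cs k s - dnf cs k s)) (at s)" by metis
      then show ?thesis using True by simp
    qed simp
  qed
  then show ?thesis by simp
qed

lemma Tp_deriv: "(Tp cs x has_real_derivative Dt cs x s) (at s)"
proof -
  have "((\<lambda>s. Tp cs x s) has_real_derivative Dt cs x s) (at s)"
    unfolding Tp_def Dt_def
  proof (rule DERIV_sum)
    fix k assume "k \<in> {..<length cs}"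
    then have h: "hh cs \<noteq> 0" using hh_pos[of k cs] by simp
    show "((\<lambda>s. if snd (cs!k) x > 0 then kap cs * fst (cs!k) * hh cs *
      Bp ((s - 2 * real k * hh cs) / hh cs) else 0)
      has_real_derivative (if snd (cs!k) x > 0 then kap cs * fst (cs!k) * upf cs k s else 0)) (at s)"
    proof (cases "snd (cs!k) x > 0")
      case True
      have "((\<lambda>s. kap cs * fst (cs!k) * hh cs * Bp ((s - 2 * real k * hh cs) / hh cs))
        has_real_derivative kap cs * fst (cs!k) * hh cs * (bump ((s - 2 * real k * hh cs) / hh cs) * (1 / hh cs))) (at s)"
        by (intro DERIV_cmult Bp_comp h)
      moreover have "kap cs * fst (cs!k) * hh cs * (bump ((s - 2 * real k * hh cs) / hh cs) * (1 / hh cs))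
           = kap cs * fst (cs!k) * upf cs k s"
        using h by (simp add: upf_def field_simps)
      ultimately have "((\<lambda>s. kap cs * fst (cs!k) * hh cs * Bp ((s - 2 * real k * hh cs) / hh cs))
        has_real_derivative kap cs * fst (cs!k) * upf cs k s) (at s)" by metis
      then show ?thesis using True by simp
    qed simp
  qed
  then show ?thesis by simp
qed

lemma Bp_le0: "\<sigma> \<le> 0 \<Longrightarrow> Bp \<sigma> = 0" by (simp add: Bp_def)
lemma Bp_ge1: "\<sigma> \<ge> 1 \<Longrightarrow> Bp \<sigma> = 1/6" by (auto simp: Bp_def)

lemma at0: assumes "k < length cs"
  shows "Bp ((0 - 2 * real k * hh cs) / hh cs) = 0" "Bp ((0 - (2 * real k + 1) * hh cs) / hh cs) = 0"
proof -
  have h: "hh cs > 0" using hh_pos[OF assms] .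
  show "Bp ((0 - 2 * real k * hh cs) / hh cs) = 0" using h by (intro Bp_le0) (simp add: divide_nonpos_pos)
  show "Bp ((0 - (2 * real k + 1) * hh cs) / hh cs) = 0" using h
    by (intro Bp_le0) (simp add: divide_nonpos_pos)
qed

lemma at1: assumes "k < length cs"
  shows "Bp ((1 - 2 * real k * hh cs) / hh cs) = 1/6" "Bp ((1 - (2 * real k + 1) * hh cs) / hh cs) = 1/6"
proof -
  have L: "real (length cs) > 0" using assms by (simp del: length_greater_0_conv)
  have k: "real k + 1 \<le> real (length cs)" using assms by simp
  have e1: "(1 - 2 * real k * hh cs) / hh cs = 2 * real (length cs) - 2 * real k"
    using L by (simp add: hh_def field_simps)
  have e2: "(1 - (2 * real k + 1) * hh cs) / hh cs = 2 * real (length cs) - 2 * real k - 1"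
    using L by (simp add: hh_def field_simps)
  show "Bp ((1 - 2 * real k * hh cs) / hh cs) = 1/6" unfolding e1 using k by (intro Bp_ge1) simp
  show "Bp ((1 - (2 * real k + 1) * hh cs) / hh cs) = 1/6" unfolding e2 using k by (intro Bp_ge1) simp
qed

lemma Rp0: "Rp cs x 0 = 0" unfolding Rp_def
proof (intro sum.neutral ballI)
  fix k assume "k \<in> {..<length cs}"
  then have "k < length cs" by simp
  note a = at0[OF this]
  show "(if snd (cs!k) x > 0 then kap cs * fst (cs!k) * hh cs *
      (Bp ((0 - 2 * real k * hh cs) / hh cs) - Bp ((0 - (2 * real k + 1) * hh cs) / hh cs)) else 0) = 0"
    unfolding a by simp
qed
lemma Tp0: "Tp cs x 0 = 0" unfolding Tp_def
proof (intro sum.neutral ballI)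
  fix k assume "k \<in> {..<length cs}"
  then have "k < length cs" by simp
  note a = at0[OF this]
  show "(if snd (cs!k) x > 0 then kap cs * fst (cs!k) * hh cs *
      Bp ((0 - 2 * real k * hh cs) / hh cs) else 0) = 0"
    unfolding a by simp
qed
lemma Rp1: "Rp cs x 1 = 0" unfolding Rp_def
proof (intro sum.neutral ballI)
  fix k assume "k \<in> {..<length cs}"
  then have "k < length cs" by simp
  note a = at1[OF this]
  show "(if snd (cs!k) x > 0 then kap cs * fst (cs!k) * hh cs *
      (Bp ((1 - 2 * real k * hh cs) / hh cs) - Bp ((1 - (2 * real k + 1) * hh cs) / hh cs)) else 0) = 0"
    unfolding a by simp
qed
lemma Tp1: "Tp cs x 1 = (\<Sum>p\<leftarrow>cs. fst p * pos (snd p x))"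
proof -
  have "Tp cs x 1 = (\<Sum>k<length cs. fst (cs!k) * pos (snd (cs!k) x))"
    unfolding Tp_def
  proof (rule sum.cong)
    fix k assume "k \<in> {..<length cs}"
    then have k: "k < length cs" by simp
    have h: "hh cs > 0" using hh_pos[OF k] .
    note a = at1(1)[OF k]
    show "(if snd (cs!k) x > 0 then kap cs * fst (cs!k) * hh cs * Bp ((1 - 2 * real k * hh cs) / hh cs) else 0)
        = fst (cs!k) * pos (snd (cs!k) x)"
      unfolding a using h by (simp add: kap_def pos_def)
  qed simp
  also have "\<dots> = (\<Sum>p\<leftarrow>cs. fst p * pos (snd p x))"
    by (simp add: sum_list_sum_nth atLeast0LessThan)
  finally show ?thesis .
qed

lemma clamp_id: "\<bar>a\<bar> \<le> c \<Longrightarrow> clamp c a = a"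
  by (simp add: clamp_def)

lemma F_eq:
  assumes "c \<ge> Bnd cs"
  shows "clamp_sol c (net_M 1 (NN cs) x z s) (net_b 1 (NN cs) x z s) = vec 2 (\<lambda>i. if i = 0 then Dr cs x s else Dt cs x s)"
proof -
  show ?thesis
  proof (cases "Pf cs x s = 0")
    case True
    then have "Dr cs x s = 0" "Dt cs x s = 0" using key[of cs x s] by auto
    then show ?thesis unfolding netM_NN netb_NN clamp_sol_M2 using True
      by (intro eq_vecI) auto
  next
    case False
    then have e: "Phi cs s = Dr cs x s" "Qf cs x s * Phi cs s / Pf cs x s = Dt cs x s"
      "\<bar>Dr cs x s\<bar> \<le> c" "\<bar>Dt cs x s\<bar> \<le> c" using key[of cs x s] assms by auto
    show ?thesis unfolding netM_NN netb_NN clamp_sol_M2 using False e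
      by (intro eq_vecI) (auto simp: clamp_id)
  qed
qed



lemma uniq1:
  fixes f p g :: "real \<Rightarrow> real"
  assumes f: "\<And>s. s \<in> {0..1} \<Longrightarrow> (f has_real_derivative g s) (at s within {0..1})"
    and p: "\<And>s. (p has_real_derivative g s) (at s)"
  shows "f 1 - p 1 = f 0 - p 0"
proof -
  define d where "d = (\<lambda>r. f r - p r)"
  have D: "(d has_real_derivative 0) (at s within {0..1})" if "s \<in> {0..1}" for s
  proof -
    have "((\<lambda>r. f r - p r) has_real_derivative g s - g s) (at s within {0..1})"
      by (rule DERIV_diff[OF f[OF that] has_field_derivative_at_within[OF p]])
    then show ?thesis unfolding d_def by simp
  qed
  have "continuous (at s within {0..1}) d" if "s \<in> {0..1}" for s
    by (rule DERIV_continuous[OF D[OF that]])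
  then have cont: "continuous_on {0..1} d"
    unfolding continuous_on_eq_continuous_within by blast
  have der: "DERIV d s :> 0" if "0 < s" "s < 1" for s
  proof -
    have "at s within {0..1} = at s" using that by (rule at_within_Icc_at)
    moreover have "(d has_real_derivative 0) (at s within {0..1})" using that by (intro D) auto
    ultimately show ?thesis by simp
  qed
  have "d 1 = d 0" by (rule DERIV_isconst_end[OF _ cont der]) auto
  then show ?thesis unfolding d_def .
qed

theorem mainTheorem13:
  fixes m :: nat and S :: "real vec set"
  assumes "semialgebraic m S"
  shows "\<exists>(n::nat) (N::isdnet) (C::nat). is_ISDnet m n N \<and>
           (\<forall>c::real. c \<ge> real C \<longrightarrow>
              (\<forall>x \<in> carrier_vec m.
                 (\<exists>sol. ode_solution n N c x (0\<^sub>v (n + 1)) 0 1 sol) \<and>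
                 (\<forall>sol. ode_solution n N c x (0\<^sub>v (n + 1)) 0 1 sol \<longrightarrow>
                    sol 1 = vec (n + 1) (\<lambda>i. if i = n then (if x \<in> S then 1 else 0) else 0))))"
proof -
  obtain cs where cs: "\<forall>p\<in>set cs. snd p \<in> ISD_on (XV m)"
    "\<forall>x\<in>carrier_vec m. (if x \<in> S then 1 else 0) = (\<Sum>p\<leftarrow>cs. fst p * pos (snd p x))"
    using semialg_rep[OF assms] by blast
  define C where "C = nat \<lceil>Bnd cs\<rceil>"
  have CB: "Bnd cs \<le> real C" unfolding C_def by linarith
  have main: "(\<exists>sol. ode_solution 1 (NN cs) c x (0\<^sub>v (1 + 1)) 0 1 sol) \<and>
                 (\<forall>sol. ode_solution 1 (NN cs) c x (0\<^sub>v (1 + 1)) 0 1 sol \<longrightarrow>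
                    sol 1 = vec (1 + 1) (\<lambda>i. if i = 1 then (if x \<in> S then 1 else 0) else 0))"
    if c: "c \<ge> real C" and x: "x \<in> carrier_vec m" for c x
  proof
    have F: "clamp_sol c (net_M 1 (NN cs) x z s) (net_b 1 (NN cs) x z s) = vec 2 (\<lambda>i. if i = 0 then Dr cs x s else Dt cs x s)"
      for z s using F_eq[of cs c x z s] c CB by simp
    define sol where "sol = (\<lambda>s. vec 2 (\<lambda>i. if i = 0 then Rp cs x s else Tp cs x s))"
    have "ode_solution 1 (NN cs) c x (0\<^sub>v (1 + 1)) 0 1 sol"
      unfolding ode_solution_def
    proof (intro conjI ballI allI impI)
      show "sol 0 = 0\<^sub>v (1 + 1)" unfolding sol_def by (intro eq_vecI) (auto simp: Rp0 Tp0)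
      fix s :: real assume s: "s \<in> {0..1}"
      show "sol s \<in> carrier_vec (1 + 1)" unfolding sol_def by simp
      fix i :: nat assume i: "i < 1 + 1"
      show "((\<lambda>r. sol r $ i) has_real_derivative
          clamp_sol c (net_M 1 (NN cs) x (sol s) s) (net_b 1 (NN cs) x (sol s) s) $ i) (at s within {0..1})"
      proof (cases "i = 0")
        case True
        then show ?thesis unfolding F sol_def using i
          by (simp add: has_field_derivative_at_within[OF Rp_deriv])
      next
        case False
        then show ?thesis unfolding F sol_def using i
          by (simp add: has_field_derivative_at_within[OF Tp_deriv])
      qed
    qed
    then show "\<exists>sol. ode_solution 1 (NN cs) c x (0\<^sub>v (1 + 1)) 0 1 sol" by blast
    show "\<forall>sol. ode_solution 1 (NN cs) c x (0\<^sub>v (1 + 1)) 0 1 sol \<longrightarrow>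
                    sol 1 = vec (1 + 1) (\<lambda>i. if i = 1 then (if x \<in> S then 1 else 0) else 0)"
    proof (intro allI impI)
      fix sol assume od: "ode_solution 1 (NN cs) c x (0\<^sub>v (1 + 1)) 0 1 sol"
      have s0: "sol 0 = 0\<^sub>v 2" using od unfolding ode_solution_def one_add_one by blast
      have car: "sol 1 \<in> carrier_vec 2" using od unfolding ode_solution_def one_add_one by auto
      have der: "((\<lambda>r. sol r $ i) has_real_derivative (if i = 0 then Dr cs x s else Dt cs x s)) (at s within {0..1})"
        if "s \<in> {0..1}" "i < 2" for s i
      proof -
        have "\<forall>i<2. ((\<lambda>r. sol r $ i) has_real_derivative clamp_sol c (net_M 1 (NN cs) x (sol s) s) (net_b 1 (NN cs) x (sol s) s) $ i) (at s within {0..1})"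
          using od that(1) unfolding ode_solution_def one_add_one by blast
        then have "((\<lambda>r. sol r $ i) has_real_derivative vec 2 (\<lambda>i. if i = 0 then Dr cs x s else Dt cs x s) $ i) (at s within {0..1})"
          unfolding F using that(2) by blast
        then show ?thesis using that(2) by simp
      qed
      have c0: "sol 1 $ 0 - Rp cs x 1 = sol 0 $ 0 - Rp cs x 0"
        by (rule uniq1[OF _ Rp_deriv]) (use der[of _ 0] in simp)
      have c1: "sol 1 $ 1 - Tp cs x 1 = sol 0 $ 1 - Tp cs x 0"
        by (rule uniq1[OF _ Tp_deriv]) (use der[of _ 1] in simp)
      have v0: "sol 1 $ 0 = 0" using c0 s0 Rp0 Rp1 by simp
      have v1: "sol 1 $ 1 = (if x \<in> S then 1 else 0)" using c1 s0 Tp0 Tp1 cs(2) x by simp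
      show "sol 1 = vec (1 + 1) (\<lambda>i. if i = 1 then (if x \<in> S then 1 else 0) else 0)"
      proof (rule eq_vecI)
        fix i assume "i < dim_vec (vec (1 + 1) (\<lambda>i. if i = 1 then (if x \<in> S then 1 else 0) else (0::real)))"
        then have "i = 0 \<or> i = 1" by auto
        then show "sol 1 $ i = vec (1 + 1) (\<lambda>i. if i = 1 then (if x \<in> S then 1 else 0) else 0) $ i"
          using v0 v1 by auto
      qed (use car in simp)
    qed
  qed
  show ?thesis
    apply (rule exI[of _ 1], rule exI[of _ "NN cs"], rule exI[of _ C], rule conjI)
     apply (rule ISD_NN[OF cs(1)])
    apply (intro allI impI ballI)
    apply (rule main)
     apply assumption+
    done
qed

end
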